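(* Let $m\in\{1,2\}$, $K>0$, $\gamma=3$, and let $(\rho,u)$ be a classical (smooth, $\rho>0$) solution of the radially symmetric isentropic compressible Euler equations $$(r^m\rho)_t+(r^m\rho u)_r=0,\qquad (r^m\rho u)_t+(r^m\rho u^2)_r+r^m p_r=0,\qquad p=K\rho^\gamma,$$ with characteristic speeds $c_1=u-h$, $c_2=u+h$, where $h=\sqrt{K\gamma}\,\rho^{(\gamma-1)/2}$. Let $\Omega=[a,b]\subset(0,\infty)$ and suppose $c_1(\cdot,0),c_2(\cdot,0)\in C^1(\Omega)$, $c_1(r,0)>0$ for all $r\in\Omega$, and $c_1,c_2\in C^1(D(\Omega,T))$ for some $T>0$. Then for all $(r,t)\in D(\Omega,T)$, $$c_1(r,t)\ \ge\ \min_{r'\in\Omega}c_1(r',0)\qquad\text{and}\qquad c_2(r,t)\ \le\ \|c_2(\cdot,0)\|_{L^\infty(\Omega)}.$$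
   Context: The flow maps of the two characteristic families are defined by $\partial_t\xi(r_0,t)=c_1(\xi(r_0,t),t)$, $\partial_t\psi(r_0,t)=c_2(\psi(r_0,t),t)$, $\xi(r_0,0)=\psi(r_0,0)=r_0$. For $\Omega=[a,b]$, the domain of influence $D(\Omega,T)$ is the set of all $(r,t)\in\mathbb{R}\times[0,T]$ such that there exist $r_1,r_2\in\Omega$ with $\psi(r_1,t)=\xi(r_2,t)=r$. *)

theory Defs
  imports "HOL-Analysis.Analysis"
begin

definition half_strip :: "real \<Rightarrow> (real \<times> real) set" where
  "half_strip T = {(r, t). 0 < r \<and> 0 \<le> t \<and> t \<le> T}"

definition pd_r :: "(real \<Rightarrow> real \<Rightarrow> real) \<Rightarrow> real \<Rightarrow> real \<Rightarrow> real" where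
  "pd_r f r t = deriv (\<lambda>s. f s t) r"

definition pd_t :: "real \<Rightarrow> (real \<Rightarrow> real \<Rightarrow> real) \<Rightarrow> real \<Rightarrow> real \<Rightarrow> real" where
  "pd_t T f r t = vector_derivative (\<lambda>s. f r s) (at t within {0..T})"

definition C1_strip :: "real \<Rightarrow> (real \<Rightarrow> real \<Rightarrow> real) \<Rightarrow> bool" where
  "C1_strip T f \<longleftrightarrow>
     (\<forall>(r, t) \<in> half_strip T.
        (\<lambda>s. f s t) differentiable (at r) \<and>
        (\<lambda>s. f r s) differentiable (at t within {0..T})) \<and>
     continuous_on (half_strip T) (\<lambda>(r, t). f r t) \<and>
     continuous_on (half_strip T) (\<lambda>(r, t). pd_r f r t) \<and>
     continuous_on (half_strip T) (\<lambda>(r, t). pd_t T f r t)"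

definition pressure :: "real \<Rightarrow> real \<Rightarrow> real \<Rightarrow> real" where
  "pressure K \<gamma> \<rho> = K * \<rho> powr \<gamma>"

definition sound :: "real \<Rightarrow> real \<Rightarrow> real \<Rightarrow> real" where
  "sound K \<gamma> \<rho> = sqrt (K * \<gamma>) * \<rho> powr ((\<gamma> - 1) / 2)"

definition c1 :: "real \<Rightarrow> real \<Rightarrow> (real \<Rightarrow> real \<Rightarrow> real) \<Rightarrow> (real \<Rightarrow> real \<Rightarrow> real) \<Rightarrow> real \<Rightarrow> real \<Rightarrow> real" where
  "c1 K \<gamma> rho u r t = u r t - sound K \<gamma> (rho r t)"

definition c2 :: "real \<Rightarrow> real \<Rightarrow> (real \<Rightarrow> real \<Rightarrow> real) \<Rightarrow> (real \<Rightarrow> real \<Rightarrow> real) \<Rightarrow> real \<Rightarrow> real \<Rightarrow> real" where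
  "c2 K \<gamma> rho u r t = u r t + sound K \<gamma> (rho r t)"

definition radial_euler_solution ::
  "nat \<Rightarrow> real \<Rightarrow> real \<Rightarrow> real \<Rightarrow> (real \<Rightarrow> real \<Rightarrow> real) \<Rightarrow> (real \<Rightarrow> real \<Rightarrow> real) \<Rightarrow> bool" where
  "radial_euler_solution m K \<gamma> T rho u \<longleftrightarrow>
     C1_strip T rho \<and> C1_strip T u \<and>
     (\<forall>(r, t) \<in> half_strip T. 0 < rho r t) \<and>
     (\<forall>(r, t) \<in> half_strip T.
        pd_t T (\<lambda>r t. r ^ m * rho r t) r t + pd_r (\<lambda>r t. r ^ m * rho r t * u r t) r t = 0 \<and>
        pd_t T (\<lambda>r t. r ^ m * rho r t * u r t) r t
          + pd_r (\<lambda>r t. r ^ m * rho r t * (u r t)\<^sup>2) r t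
          + r ^ m * pd_r (\<lambda>r t. pressure K \<gamma> (rho r t)) r t = 0)"

definition is_flow :: "real \<Rightarrow> real \<Rightarrow> real \<Rightarrow> (real \<Rightarrow> real \<Rightarrow> real) \<Rightarrow> (real \<Rightarrow> real \<Rightarrow> real) \<Rightarrow> bool" where
  "is_flow a b T c fl \<longleftrightarrow>
     (\<forall>r0 \<in> {a..b}. fl r0 0 = r0 \<and>
        (\<forall>t \<in> {0..T}. 0 < fl r0 t \<and>
           ((fl r0) has_real_derivative c (fl r0 t) t) (at t within {0..T})))"

definition domain_of_influence ::
  "real \<Rightarrow> real \<Rightarrow> real \<Rightarrow> (real \<Rightarrow> real \<Rightarrow> real) \<Rightarrow> (real \<Rightarrow> real \<Rightarrow> real) \<Rightarrow> (real \<times> real) set" where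
  "domain_of_influence a b T xi psi =
     {(r, t). 0 \<le> t \<and> t \<le> T \<and>
        (\<exists>r1 \<in> {a..b}. \<exists>r2 \<in> {a..b}. psi r1 t = r \<and> xi r2 t = r)}"

end

theory Submission
  imports Defs
begin


lemma at_within_Icc_not_bot: "0 < (T::real) \<Longrightarrow> s \<in> {0..T} \<Longrightarrow> at s within {0..T} \<noteq> bot"
  using trivial_limit_within islimpt_Icc by (metis atLeastAtMost_iff)

lemma C1_strip_D:
  assumes "C1_strip T f" "(r, t) \<in> half_strip T"
  shows "(\<lambda>s. f s t) differentiable (at r)" "(\<lambda>s. f r s) differentiable (at t within {0..T})"
proof -
  have "\<forall>(r, t) \<in> half_strip T. (\<lambda>s. f s t) differentiable (at r) \<and> (\<lambda>s. f r s) differentiable (at t within {0..T})"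
    using assms(1) unfolding C1_strip_def by (elim conjE)
  from bspec[OF this assms(2)] show "(\<lambda>s. f s t) differentiable (at r)" "(\<lambda>s. f r s) differentiable (at t within {0..T})"
    by simp_all
qed

lemma chain_strip:
  assumes C: "C1_strip T f" and T: "0 < T"
    and s: "s \<in> {0..T}" and X: "(X has_real_derivative X') (at s within {0..T})" and Xpos: "0 < X s"
  shows "((\<lambda>s. f (X s) s) has_real_derivative (pd_r f (X s) s * X' + pd_t T f (X s) s)) (at s within {0..T})"
proof -
  let ?x = "X s"
  have inS: "(?x, s) \<in> half_strip T" using s Xpos by (auto simp: half_strip_def)
  have dx: "(\<lambda>r. f r s) differentiable (at ?x)" and dy: "(\<lambda>t. f ?x t) differentiable (at s within {0..T})"
    using C1_strip_D[OF C inS] by auto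
  have "((\<lambda>r. f r s) has_real_derivative pd_r f ?x s) (at ?x)"
    using dx unfolding pd_r_def by (simp only: DERIV_deriv_iff_real_differentiable)
  then have fx: "((\<lambda>r. f r s) has_derivative (\<lambda>h. pd_r f ?x s * h)) (at ?x within {0<..})"
    unfolding has_field_derivative_def by (rule has_derivative_at_withinI)
  have fy: "((\<lambda>t. f x t) has_derivative blinfun_apply (blinfun_scaleR_left (pd_t T f x t))) (at t within {0..T})"
    if "x \<in> {0<..}" "t \<in> {0..T}" for x t
  proof -
    have "(x, t) \<in> half_strip T" using that by (auto simp: half_strip_def)
    then have "(\<lambda>t. f x t) differentiable (at t within {0..T})" using C1_strip_D[OF C] by blast
    then have "((\<lambda>t. f x t) has_vector_derivative pd_t T f x t) (at t within {0..T})"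
      unfolding pd_t_def by (simp add: vector_derivative_works)
    then show ?thesis by (simp add: has_vector_derivative_def)
  qed
  have cont: "continuous_on (half_strip T) (\<lambda>(r, t). pd_t T f r t)" using C unfolding C1_strip_def by (elim conjE)
  have hs: "half_strip T = {0<..} \<times> {0..T}" by (auto simp: half_strip_def)
  have "continuous (at (?x, s) within {0<..} \<times> {0..T}) (\<lambda>(r, t). pd_t T f r t)"
    using cont inS hs by (metis continuous_on_eq_continuous_within)
  note cc = this
  have c2: "continuous (at (?x, s) within {0<..} \<times> {0..T}) (\<lambda>(r, t). blinfun_scaleR_left (pd_t T f r t))"
    using bounded_linear.continuous[OF bounded_linear_blinfun_scaleR_left cc] by (simp add: case_prod_unfold)
  have D: "((\<lambda>(r, t). f r t) has_derivative (\<lambda>(tx, ty). pd_r f ?x s * tx + blinfun_scaleR_left (pd_t T f ?x s) ty)) (at (?x, s) within {0<..} \<times> {0..T})"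
    by (rule has_derivative_partialsI[OF fx fy c2]) (use s in auto)
  have "at (?x, s) within {0<..} \<times> {0..T} = at (?x, s) within UNIV \<times> {0..T}"
  proof (rule at_within_nhd[where S="{0<..} \<times> UNIV"])
    show "(?x, s) \<in> {0<..} \<times> UNIV" using Xpos by simp
    show "open ({0::real<..} \<times> (UNIV::real set))" by (intro open_Times) auto
    show "{0<..} \<times> {0..T} \<inter> ({0<..} \<times> UNIV) - {(?x, s)} = UNIV \<times> {0..T} \<inter> ({0<..} \<times> UNIV) - {(?x, s)}"
      by blast
  qed
  note D1 = D[unfolded this]
  have sub: "(\<lambda>s. (X s, s)) ` {0..T} \<subseteq> UNIV \<times> {0..T}" by auto
  have D2: "((\<lambda>(r, t). f r t) has_derivative (\<lambda>(tx, ty). pd_r f ?x s * tx + blinfun_scaleR_left (pd_t T f ?x s) ty)) (at (?x, s) within (\<lambda>s. (X s, s)) ` {0..T})"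
    by (rule has_derivative_subset[OF D1 sub])
  have G: "((\<lambda>s. (X s, s)) has_derivative (\<lambda>h. (h * X', h))) (at s within {0..T})"
    using X unfolding has_field_derivative_def
    by (auto intro!: derivative_eq_intros)
  have "((\<lambda>s. f (X s) s) has_derivative (\<lambda>x. pd_r f (X s) s * (x * X') + x * pd_t T f (X s) s)) (at s within {0..T})"
    using has_derivative_in_compose[OF G D2] unfolding o_def by simp
  then show ?thesis unfolding has_field_derivative_def
    by (rule has_derivative_eq_rhs) (auto simp: fun_eq_iff algebra_simps)
qed


lemma incr_within:
  fixes f :: "real \<Rightarrow> real"
  assumes pq: "p \<le> q"
    and D: "\<And>s. s \<in> {p..q} \<Longrightarrow> (f has_real_derivative f' s) (at s within {p..q})"
    and N: "\<And>s. s \<in> {p..q} \<Longrightarrow> 0 \<le> f' s"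
  shows "f p \<le> f q"
proof (rule DERIV_nonneg_imp_increasing_open[OF pq])
  fix x assume x: "p < x" "x < q"
  then have "at x within {p..q} = at x" by (rule at_within_Icc_at)
  with D[of x] x have "(f has_real_derivative f' x) (at x)" by simp
  with N[of x] x show "\<exists>y. DERIV f x :> y \<and> 0 \<le> y" by auto
next
  show "continuous_on {p..q} f"
    using D by (meson DERIV_continuous continuous_on_eq_continuous_within)
qed

lemma stay_nonneg:
  fixes F :: "real \<Rightarrow> real"
  assumes pq: "p \<le> q" and cont: "continuous_on {p..q} F" and F0: "0 \<le> F p"
    and Z: "\<And>s. s \<in> {p..<q} \<Longrightarrow> F s = 0 \<Longrightarrow> \<exists>d>0. \<forall>h>0. s + h \<in> {p..q} \<longrightarrow> h < d \<longrightarrow> 0 < F (s + h)"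
  shows "\<forall>s\<in>{p..q}. 0 \<le> F s"
proof (rule ccontr)
  assume "\<not> ?thesis"
  then obtain s0 where s0: "s0 \<in> {p..q}" "F s0 < 0" by (auto simp: not_le)
  define A where "A = {p..s0} \<inter> F -` {0..}"
  have cA: "continuous_on {p..s0} F" using cont s0 by (auto intro: continuous_on_subset)
  have "closed A" unfolding A_def by (rule continuous_closed_preimage[OF cA]) auto
  moreover have "A \<noteq> {}" using F0 s0 by (auto simp: A_def)
  moreover have "bdd_above A" by (auto simp: A_def bdd_above_def)
  ultimately have s1A: "Sup A \<in> A" by (metis closed_contains_Sup)
  define s1 where "s1 = Sup A"
  have ub: "x \<le> s1" if "x \<in> A" for x using that \<open>bdd_above A\<close> by (simp add: s1_def cSup_upper)
  have s1: "p \<le> s1" "s1 \<le> s0" "0 \<le> F s1" using s1A by (auto simp: A_def s1_def)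
  have "s1 \<noteq> s0" using s1 s0 by auto
  with s1 have lt: "s1 < s0" by simp
  have "\<exists>z. s1 \<le> z \<and> z \<le> s0 \<and> F z = 0"
    by (rule IVT2') (use s1 s0 lt in \<open>auto intro: continuous_on_subset[OF cont]\<close>)
  then obtain z where z: "s1 \<le> z" "z \<le> s0" "F z = 0" by auto
  have "z \<in> A" using z s1 by (auto simp: A_def)
  then have "z = s1" using ub z by force
  with z have Fs1: "F s1 = 0" by simp
  have "s1 \<in> {p..<q}" using s1 lt s0 by auto
  from Z[OF this Fs1] obtain d where d: "d > 0" "\<And>h. h > 0 \<Longrightarrow> s1 + h \<in> {p..q} \<Longrightarrow> h < d \<Longrightarrow> 0 < F (s1 + h)"
    by blast
  define h where "h = min (d/2) ((s0 - s1)/2)"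
  have h1: "h \<le> (s0 - s1)/2" "h \<le> d/2" unfolding h_def by (rule min.cobounded2, rule min.cobounded1)
  have h: "h > 0" "h < d" "s1 + h \<le> s0" using d lt h1 by (auto simp: h_def)
  then have "s1 + h \<in> {p..q}" using s1 s0 by auto
  with d h have "0 < F (s1 + h)" by auto
  then have "s1 + h \<in> A" using h s1 by (auto simp: A_def)
  then have "s1 + h \<le> s1" by (rule ub)
  with h show False by simp
qed

lemma stay_nonneg_back:
  fixes F :: "real \<Rightarrow> real"
  assumes pq: "p \<le> q" and cont: "continuous_on {p..q} F" and F0: "0 \<le> F q"
    and Z: "\<And>s. s \<in> {p<..q} \<Longrightarrow> F s = 0 \<Longrightarrow> \<exists>d>0. \<forall>h>0. s - h \<in> {p..q} \<longrightarrow> h < d \<longrightarrow> 0 < F (s - h)"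
  shows "\<forall>s\<in>{p..q}. 0 \<le> F s"
proof -
  define G where "G = (\<lambda>s. F (p + q - s))"
  have cG: "continuous_on {p..q} G" unfolding G_def
    by (rule continuous_on_compose2[OF cont]) (auto intro!: continuous_intros)
  have "\<forall>s\<in>{p..q}. 0 \<le> G s"
  proof (rule stay_nonneg[OF pq cG])
    show "0 \<le> G p" using F0 by (simp add: G_def)
    fix s assume s: "s \<in> {p..<q}" "G s = 0"
    then have "p + q - s \<in> {p<..q}" "F (p + q - s) = 0" by (auto simp: G_def)
    from Z[OF this] obtain d where d: "d > 0" "\<forall>h>0. p + q - s - h \<in> {p..q} \<longrightarrow> h < d \<longrightarrow> 0 < F (p + q - s - h)"
      by blast
    show "\<exists>d>0. \<forall>h>0. s + h \<in> {p..q} \<longrightarrow> h < d \<longrightarrow> 0 < G (s + h)"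
    proof (intro exI[of _ d] conjI allI impI)
      fix h :: real assume "h > 0" "s + h \<in> {p..q}" "h < d"
      with d(2)[rule_format, of h] show "0 < G (s + h)" by (auto simp: G_def algebra_simps)
    qed (use d in auto)
  qed
  then show ?thesis
    by (metis G_def add_diff_cancel_left' atLeastAtMost_iff diff_add_cancel diff_le_eq le_diff_eq)
qed

lemma bound_between:
  fixes P :: "real \<Rightarrow> real \<Rightarrow> real"
  assumes P: "continuous_on (half_strip T) (\<lambda>(r, t). P r t)"
    and f: "continuous_on {p..q} f" and g: "continuous_on {p..q} g"
    and pq: "0 \<le> p" "q \<le> T"
    and fg: "\<And>s. s \<in> {p..q} \<Longrightarrow> 0 < f s \<and> f s \<le> g s"
  shows "\<exists>L. \<forall>s\<in>{p..q}. \<forall>x. f s \<le> x \<longrightarrow> x \<le> g s \<longrightarrow> \<bar>P x s\<bar> \<le> L"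
proof -
  define \<Phi> where "\<Phi> = (\<lambda>z::real \<times> real. (f (fst z) + snd z * (g (fst z) - f (fst z)), fst z))"
  have cf: "continuous_on ({p..q} \<times> {0..1}) (\<lambda>z::real\<times>real. f (fst z))"
    by (rule continuous_on_compose2[OF f]) (auto intro!: continuous_intros)
  have cg: "continuous_on ({p..q} \<times> {0..1}) (\<lambda>z::real\<times>real. g (fst z))"
    by (rule continuous_on_compose2[OF g]) (auto intro!: continuous_intros)
  have cPhi: "continuous_on ({p..q} \<times> {0..1}) \<Phi>" unfolding \<Phi>_def
    by (intro continuous_intros cf cg)
  have sub1: "\<Phi> (s, l) \<in> half_strip T" if sl: "s \<in> {p..q}" "l \<in> {0..1}" for s l
  proof -
    have "0 < f s" "f s \<le> g s" using fg[OF sl(1)] by auto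
    moreover have "0 \<le> l * (g s - f s)" using sl(2) \<open>f s \<le> g s\<close> by simp
    ultimately have "0 < f s + l * (g s - f s)" by linarith
    then show "\<Phi> (s, l) \<in> half_strip T" using sl pq by (auto simp: \<Phi>_def half_strip_def)
  qed
  have sub: "\<Phi> ` ({p..q} \<times> {0..1}) \<subseteq> half_strip T" using sub1 by auto
  have cc: "continuous_on ({p..q} \<times> {0..1}) (\<lambda>z. (\<lambda>(r, t). P r t) (\<Phi> z))"
    by (rule continuous_on_compose2[OF P cPhi sub])
  have "compact ((\<lambda>z. (\<lambda>(r, t). P r t) (\<Phi> z)) ` ({p..q} \<times> {0..1}))"
    by (rule compact_continuous_image[OF cc]) (intro compact_Times compact_Icc)
  then obtain L where L: "\<And>y. y \<in> (\<lambda>z. (\<lambda>(r, t). P r t) (\<Phi> z)) ` ({p..q} \<times> {0..1}) \<Longrightarrow> norm y \<le> L"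
    using compact_imp_bounded bounded_iff by metis
  show ?thesis
  proof (intro exI[of _ L] ballI allI impI)
    fix s x assume s: "s \<in> {p..q}" and x: "f s \<le> x" "x \<le> g s"
    define l where "l = (if g s = f s then 0 else (x - f s) / (g s - f s))"
    have l: "l \<in> {0..1}" using x by (auto simp: l_def divide_simps)
    have "f s + l * (g s - f s) = x" using x by (auto simp: l_def divide_simps)
    then have "\<Phi> (s, l) = (x, s)" by (simp add: \<Phi>_def)
    then have "P x s \<in> (\<lambda>z. (\<lambda>(r, t). P r t) (\<Phi> z)) ` ({p..q} \<times> {0..1})"
      using s l by (metis (no_types, lifting) case_prod_conv image_eqI mem_Sigma_iff)
    from L[OF this] show "\<bar>P x s\<bar> \<le> L" by simp
  qed
qed



lemma C1_dr:
  assumes "C1_strip T f" "(r, t) \<in> half_strip T"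
  shows "((\<lambda>x. f x t) has_real_derivative pd_r f r t) (at r)"
  using C1_strip_D(1)[OF assms] unfolding pd_r_def by (simp only: DERIV_deriv_iff_real_differentiable)

lemma C1_dt:
  assumes "C1_strip T f" "(r, t) \<in> half_strip T"
  shows "((\<lambda>s. f r s) has_real_derivative pd_t T f r t) (at t within {0..T})"
  using C1_strip_D(2)[OF assms] unfolding pd_t_def has_real_derivative_iff_has_vector_derivative
  by (simp add: vector_derivative_works)

lemma pd_t_eq:
  assumes "0 < T" "t \<in> {0..T}" "((\<lambda>s. F r s) has_real_derivative D) (at t within {0..T})"
  shows "pd_t T F r t = D"
  unfolding pd_t_def
  by (rule vector_derivative_within[OF at_within_Icc_not_bot[OF assms(1,2)]])
     (use assms(3) in \<open>simp add: has_real_derivative_iff_has_vector_derivative\<close>)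

lemma pd_r_eq:
  assumes "((\<lambda>x. F x t) has_real_derivative D) (at r)"
  shows "pd_r F r t = D"
  unfolding pd_r_def by (rule DERIV_imp_deriv[OF assms])

lemma C1_cont_curve:
  assumes C: "continuous_on (half_strip T) (\<lambda>(r, t). f r t)"
    and X: "continuous_on {p..q} X" and pos: "\<And>s. s \<in> {p..q} \<Longrightarrow> 0 < X s"
    and pq: "0 \<le> p" "q \<le> T"
  shows "continuous_on {p..q} (\<lambda>s. f (X s) s)"
proof -
  have "continuous_on {p..q} (\<lambda>s. (\<lambda>(r, t). f r t) (X s, s))"
    by (rule continuous_on_compose2[OF C]) (use pos pq in \<open>auto intro!: continuous_intros X simp: half_strip_def\<close>)
  then show ?thesis by simp
qed

locale eul =
  fixes m :: nat and K T :: real and rho u :: "real \<Rightarrow> real \<Rightarrow> real"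
  assumes T: "0 < T" and K: "0 < K" and m1: "1 \<le> m"
    and sol: "radial_euler_solution m K 3 T rho u"
begin

lemma Crho: "C1_strip T rho" and Cu: "C1_strip T u"
  using sol unfolding radial_euler_solution_def by auto

lemma rpos: "(r, t) \<in> half_strip T \<Longrightarrow> 0 < rho r t"
proof -
  assume a: "(r, t) \<in> half_strip T"
  have "\<forall>(r, t) \<in> half_strip T. 0 < rho r t" using sol unfolding radial_euler_solution_def by (elim conjE)
  from bspec[OF this a] show ?thesis by simp
qed

lemma pdes:
  assumes a: "(r, t) \<in> half_strip T"
  shows "pd_t T (\<lambda>r t. r ^ m * rho r t) r t + pd_r (\<lambda>r t. r ^ m * rho r t * u r t) r t = 0"
    "pd_t T (\<lambda>r t. r ^ m * rho r t * u r t) r t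
          + pd_r (\<lambda>r t. r ^ m * rho r t * (u r t)\<^sup>2) r t
          + r ^ m * pd_r (\<lambda>r t. pressure K 3 (rho r t)) r t = 0"
proof -
  have "\<forall>(r, t)\<in>half_strip T.
        pd_t T (\<lambda>r t. r ^ m * rho r t) r t + pd_r (\<lambda>r t. r ^ m * rho r t * u r t) r t = 0 \<and>
        pd_t T (\<lambda>r t. r ^ m * rho r t * u r t) r t
          + pd_r (\<lambda>r t. r ^ m * rho r t * (u r t)\<^sup>2) r t
          + r ^ m * pd_r (\<lambda>r t. pressure K 3 (rho r t)) r t = 0"
    using sol unfolding radial_euler_solution_def by (elim conjE)
  from bspec[OF this a] show
    "pd_t T (\<lambda>r t. r ^ m * rho r t) r t + pd_r (\<lambda>r t. r ^ m * rho r t * u r t) r t = 0"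
    "pd_t T (\<lambda>r t. r ^ m * rho r t * u r t) r t
          + pd_r (\<lambda>r t. r ^ m * rho r t * (u r t)\<^sup>2) r t
          + r ^ m * pd_r (\<lambda>r t. pressure K 3 (rho r t)) r t = 0" by simp_all
qed

lemma euler_nc:
  assumes a: "(r, t) \<in> half_strip T"
  shows "pd_t T rho r t + u r t * pd_r rho r t + rho r t * pd_r u r t + real m * rho r t * u r t / r = 0"
    and "pd_t T u r t + u r t * pd_r u r t + 3 * K * rho r t * pd_r rho r t = 0"
proof -
  have r: "0 < r" and t: "t \<in> {0..T}" using a by (auto simp: half_strip_def)
  have R: "0 < rho r t" by (rule rpos[OF a])
  note rr = C1_dr[OF Crho a] and ru = C1_dr[OF Cu a] and tr = C1_dt[OF Crho a] and tu = C1_dt[OF Cu a]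
  define P where "P = r ^ (m - 1)"
  have rm: "r ^ m = r * P" unfolding P_def using m1 by (metis Suc_diff_le diff_Suc_1 power_Suc)
  have P0: "P > 0" unfolding P_def using r by simp
  have a1: "pd_t T (\<lambda>r t. r ^ m * rho r t) r t = r ^ m * pd_t T rho r t"
    by (rule pd_t_eq[OF T t]) (auto intro!: derivative_eq_intros tr)
  have a2: "pd_r (\<lambda>r t. r ^ m * rho r t * u r t) r t
      = real m * P * rho r t * u r t + r ^ m * (pd_r rho r t * u r t + rho r t * pd_r u r t)"
    by (rule pd_r_eq) (auto intro!: derivative_eq_intros rr ru simp: P_def algebra_simps)
  have a3: "pd_t T (\<lambda>r t. r ^ m * rho r t * u r t) r t = r ^ m * (pd_t T rho r t * u r t + rho r t * pd_t T u r t)"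
    by (rule pd_t_eq[OF T t]) (auto intro!: derivative_eq_intros tr tu simp: algebra_simps)
  have a4: "pd_r (\<lambda>r t. r ^ m * rho r t * (u r t)\<^sup>2) r t
      = real m * P * rho r t * (u r t)\<^sup>2 + r ^ m * (pd_r rho r t * (u r t)\<^sup>2 + rho r t * (2 * u r t * pd_r u r t))"
    by (rule pd_r_eq) (auto intro!: derivative_eq_intros rr ru simp: P_def algebra_simps power2_eq_square)
  have a5: "pd_r (\<lambda>r t. pressure K 3 (rho r t)) r t = 3 * K * (rho r t)\<^sup>2 * pd_r rho r t"
  proof (rule pd_r_eq)
    have "((\<lambda>x. K * (rho x t) powr 3) has_real_derivative K * (3 * (rho r t) powr (3 - of_nat 1) * pd_r rho r t)) (at r)"
      by (rule DERIV_cmult[OF DERIV_fun_powr[OF rr R]])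
    moreover have "(rho r t) powr (3 - of_nat 1) = (rho r t)\<^sup>2"
    proof -
      have e: "(3 - of_nat 1 :: real) = real 2" by simp
      show ?thesis unfolding e by (rule powr_realpow[OF R])
    qed
    ultimately show "((\<lambda>x. pressure K 3 (rho x t)) has_real_derivative 3 * K * (rho r t)\<^sup>2 * pd_r rho r t) (at r)"
      unfolding pressure_def by (simp add: algebra_simps)
  qed
  define X1 where "X1 = pd_t T rho r t + u r t * pd_r rho r t + rho r t * pd_r u r t + real m * rho r t * u r t / r"
  have "P * (r * X1) = pd_t T (\<lambda>r t. r ^ m * rho r t) r t + pd_r (\<lambda>r t. r ^ m * rho r t * u r t) r t"
    unfolding a1 a2 rm X1_def using r by (simp add: field_simps)
  then have "P * (r * X1) = 0" using pdes(1)[OF a] by simp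
  then have X1: "X1 = 0" using P0 r by simp
  then show "pd_t T rho r t + u r t * pd_r rho r t + rho r t * pd_r u r t + real m * rho r t * u r t / r = 0"
    by (simp add: X1_def)
  define X2 where "X2 = pd_t T u r t + u r t * pd_r u r t + 3 * K * rho r t * pd_r rho r t"
  have "P * (r * (rho r t * X2 + u r t * X1)) = pd_t T (\<lambda>r t. r ^ m * rho r t * u r t) r t
          + pd_r (\<lambda>r t. r ^ m * rho r t * (u r t)\<^sup>2) r t
          + r ^ m * pd_r (\<lambda>r t. pressure K 3 (rho r t)) r t"
    unfolding a3 a4 a5 rm X1_def X2_def using r by (simp add: field_simps power2_eq_square)
  then have "P * (r * (rho r t * X2 + u r t * X1)) = 0" using pdes(2)[OF a] by simp
  then have "rho r t * X2 = 0" using P0 r X1 by simp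
  then show "pd_t T u r t + u r t * pd_r u r t + 3 * K * rho r t * pd_r rho r t = 0"
    using R by (simp add: X2_def)
qed

end


context eul begin

lemma kpos: "0 < sqrt (K * 3)" using K by simp
lemma ksq: "sqrt (K * 3) * sqrt (K * 3) = 3 * K" using K by simp

lemma c1_eq: "(x, s) \<in> half_strip T \<Longrightarrow> c1 K 3 rho u x s = u x s - sqrt (K * 3) * rho x s"
  using rpos[of x s] unfolding c1_def sound_def by simp
lemma c2_eq: "(x, s) \<in> half_strip T \<Longrightarrow> c2 K 3 rho u x s = u x s + sqrt (K * 3) * rho x s"
  using rpos[of x s] unfolding c2_def sound_def by simp

definition ch1 :: "(real \<Rightarrow> real) \<Rightarrow> bool" where
  "ch1 X \<longleftrightarrow> (\<forall>s\<in>{0..T}. 0 < X s \<and>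
     (X has_real_derivative (u (X s) s - sqrt (K * 3) * rho (X s) s)) (at s within {0..T}))"
definition ch2 :: "(real \<Rightarrow> real) \<Rightarrow> bool" where
  "ch2 X \<longleftrightarrow> (\<forall>s\<in>{0..T}. 0 < X s \<and>
     (X has_real_derivative (u (X s) s + sqrt (K * 3) * rho (X s) s)) (at s within {0..T}))"

lemma ch1_cont: "ch1 X \<Longrightarrow> continuous_on {0..T} X"
  unfolding ch1_def by (meson DERIV_continuous continuous_on_eq_continuous_within)
lemma ch2_cont: "ch2 X \<Longrightarrow> continuous_on {0..T} X"
  unfolding ch2_def by (meson DERIV_continuous continuous_on_eq_continuous_within)

lemma char_deriv:
  assumes s: "s \<in> {0..T}" and Xp: "0 < X s" and \<sigma>: "\<sigma> = 1 \<or> \<sigma> = -1"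
    and XD: "(X has_real_derivative (u (X s) s + \<sigma> * sqrt (K * 3) * rho (X s) s)) (at s within {0..T})"
  shows "((\<lambda>s. u (X s) s + \<sigma> * sqrt (K * 3) * rho (X s) s) has_real_derivative
           (- \<sigma> * sqrt (K * 3) * real m * rho (X s) s * u (X s) s / X s)) (at s within {0..T})"
proof -
  have a: "(X s, s) \<in> half_strip T" using s Xp by (auto simp: half_strip_def)
  note E = euler_nc[OF a]
  define k where "k = sqrt (K * 3)"
  define V where "V = u (X s) s + \<sigma> * k * rho (X s) s"
  have D: "((\<lambda>s. u (X s) s + \<sigma> * k * rho (X s) s) has_real_derivative
      (pd_r u (X s) s * V + pd_t T u (X s) s) + \<sigma> * k * (pd_r rho (X s) s * V + pd_t T rho (X s) s)) (at s within {0..T})"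
    using chain_strip[OF Cu T s XD Xp] chain_strip[OF Crho T s XD Xp] unfolding V_def k_def
    by (intro DERIV_add DERIV_cmult) (auto simp: mult.assoc)
  have sq: "\<sigma> * \<sigma> = 1" using \<sigma> by auto
  have "(pd_r u (X s) s * V + pd_t T u (X s) s) + \<sigma> * k * (pd_r rho (X s) s * V + pd_t T rho (X s) s)
      - (- \<sigma> * k * real m * rho (X s) s * u (X s) s / X s)
      = (pd_t T u (X s) s + u (X s) s * pd_r u (X s) s + 3 * K * rho (X s) s * pd_r rho (X s) s)
        + \<sigma> * k * (pd_t T rho (X s) s + u (X s) s * pd_r rho (X s) s + rho (X s) s * pd_r u (X s) s + real m * rho (X s) s * u (X s) s / X s)
        + (\<sigma> * \<sigma> * (k * k) - 3 * K) * rho (X s) s * pd_r rho (X s) s"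
    unfolding V_def using Xp by (simp add: field_simps)
  also have "\<dots> = 0" using E ksq sq unfolding k_def by simp
  finally show ?thesis using D unfolding k_def by (simp add: DERIV_cong)
qed

lemma ch1_deriv:
  assumes "ch1 X" "s \<in> {0..T}"
  shows "((\<lambda>s. u (X s) s - sqrt (K * 3) * rho (X s) s) has_real_derivative
           (sqrt (K * 3) * real m * rho (X s) s * u (X s) s / X s)) (at s within {0..T})"
  using char_deriv[of s X 1] char_deriv[of s X "-1"] assms unfolding ch1_def by simp

lemma ch2_deriv:
  assumes "ch2 X" "s \<in> {0..T}"
  shows "((\<lambda>s. u (X s) s + sqrt (K * 3) * rho (X s) s) has_real_derivative
           (- (sqrt (K * 3) * real m * rho (X s) s * u (X s) s / X s))) (at s within {0..T})"
  using char_deriv[of s X 1] assms unfolding ch2_def by simp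

lemma cont_rho: "continuous_on (half_strip T) (\<lambda>(r, t). rho r t)"
  using Crho unfolding C1_strip_def by (elim conjE)
lemma cont_u: "continuous_on (half_strip T) (\<lambda>(r, t). u r t)"
  using Cu unfolding C1_strip_def by (elim conjE)
lemma cont_rho_r: "continuous_on (half_strip T) (\<lambda>(r, t). pd_r rho r t)"
  using Crho unfolding C1_strip_def by (elim conjE)
lemma cont_u_r: "continuous_on (half_strip T) (\<lambda>(r, t). pd_r u r t)"
  using Cu unfolding C1_strip_def by (elim conjE)

end


context eul begin

lemma c1_grow:
  assumes X: "ch1 X" and g0: "0 < u (X 0) 0 - sqrt (K * 3) * rho (X 0) 0" and s: "s \<in> {0..T}"
  shows "u (X 0) 0 - sqrt (K * 3) * rho (X 0) 0 \<le> u (X s) s - sqrt (K * 3) * rho (X s) s"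
proof -
  define k where "k = sqrt (K * 3)"
  define g where "g = (\<lambda>s. u (X s) s - k * rho (X s) s)"
  define \<alpha> where "\<alpha> = (\<lambda>s. k * real m * rho (X s) s / X s)"
  have Xp: "\<And>s. s \<in> {0..T} \<Longrightarrow> 0 < X s" using X unfolding ch1_def by auto
  have R: "\<And>s. s \<in> {0..T} \<Longrightarrow> 0 < rho (X s) s" using Xp by (intro rpos) (auto simp: half_strip_def)
  have cX: "continuous_on {0..T} X" by (rule ch1_cont[OF X])
  have cR: "continuous_on {0..T} (\<lambda>s. rho (X s) s)"
    by (rule C1_cont_curve[OF cont_rho cX Xp]) auto
  have ca: "continuous_on {0..T} \<alpha>" unfolding \<alpha>_def
    using Xp by (intro continuous_intros cR cX) (metis less_irrefl)
  define A where "A = (\<lambda>s. integral {0..s} \<alpha>)"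
  have AD: "\<And>s. s \<in> {0..T} \<Longrightarrow> (A has_real_derivative \<alpha> s) (at s within {0..T})"
    unfolding A_def by (rule integral_has_real_derivative[OF ca])
  have anonneg: "\<And>s. s \<in> {0..T} \<Longrightarrow> 0 \<le> \<alpha> s" unfolding \<alpha>_def k_def using Xp R K
    by (intro divide_nonneg_pos mult_nonneg_nonneg) (auto intro: less_imp_le)
  have A0: "A 0 = 0" by (simp add: A_def)
  have As: "0 \<le> A s"
  proof -
    have "A 0 \<le> A s"
      by (rule incr_within[of 0 s A \<alpha>]) (use s in \<open>auto intro: DERIV_subset[OF AD] anonneg\<close>)
    then show ?thesis using A0 by simp
  qed
  define \<phi> where "\<phi> = (\<lambda>s. g s * exp (- A s))"
  have gD: "\<And>s. s \<in> {0..T} \<Longrightarrow> (g has_real_derivative \<alpha> s * u (X s) s) (at s within {0..T})"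
    using ch1_deriv[OF X] unfolding g_def \<alpha>_def k_def by (simp add: field_simps)
  have phiD: "\<And>s. s \<in> {0..T} \<Longrightarrow> (\<phi> has_real_derivative (\<alpha> s * (k * rho (X s) s)) * exp (- A s)) (at s within {0..T})"
  proof -
    fix s assume s: "s \<in> {0..T}"
    have "(\<phi> has_real_derivative \<alpha> s * u (X s) s * exp (- A s) + g s * (exp (- A s) * (- \<alpha> s))) (at s within {0..T})"
    proof -
      have eA: "((\<lambda>s. exp (- A s)) has_real_derivative exp (- A s) * - \<alpha> s) (at s within {0..T})"
        by (rule DERIV_chain2[OF DERIV_exp DERIV_minus[OF AD[OF s]]])
      show ?thesis unfolding \<phi>_def by (rule DERIV_cong[OF DERIV_mult[OF gD[OF s] eA]]) (simp add: algebra_simps)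
    qed
    then show "(\<phi> has_real_derivative (\<alpha> s * (k * rho (X s) s)) * exp (- A s)) (at s within {0..T})"
      by (rule DERIV_cong) (simp add: g_def algebra_simps)
  qed
  have "\<phi> 0 \<le> \<phi> s"
  proof (rule incr_within[of 0 s \<phi>])
    show "0 \<le> s" using s by simp
    fix s' assume s': "s' \<in> {0..s}"
    then have s'T: "s' \<in> {0..T}" using s by auto
    show "(\<phi> has_real_derivative (\<alpha> s' * (k * rho (X s') s')) * exp (- A s')) (at s' within {0..s})"
      by (rule DERIV_subset[OF phiD[OF s'T]]) (use s in auto)
    show "0 \<le> (\<alpha> s' * (k * rho (X s') s')) * exp (- A s')"
      using anonneg[OF s'T] R[OF s'T] K unfolding k_def by (intro mult_nonneg_nonneg) (auto intro: less_imp_le)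
  qed
  then have "g 0 \<le> g s * exp (- A s)" by (simp add: \<phi>_def A0)
  then have "g 0 * exp (A s) \<le> g s" by (simp add: exp_minus field_simps)
  moreover have "g 0 \<le> g 0 * exp (A s)" using g0 As unfolding g_def k_def by simp
  ultimately show ?thesis unfolding g_def k_def by simp
qed

lemma c2_decay:
  assumes Y: "ch2 Y" and t: "t \<in> {0..T}" and U: "\<And>s. s \<in> {0..t} \<Longrightarrow> 0 \<le> u (Y s) s"
  shows "u (Y t) t + sqrt (K * 3) * rho (Y t) t \<le> u (Y 0) 0 + sqrt (K * 3) * rho (Y 0) 0"
proof -
  have Yp: "\<And>s. s \<in> {0..T} \<Longrightarrow> 0 < Y s" using Y unfolding ch2_def by auto
  have R: "\<And>s. s \<in> {0..T} \<Longrightarrow> 0 < rho (Y s) s" using Yp by (intro rpos) (auto simp: half_strip_def)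
  have "(\<lambda>s. - (u (Y s) s + sqrt (K * 3) * rho (Y s) s)) 0 \<le> (\<lambda>s. - (u (Y s) s + sqrt (K * 3) * rho (Y s) s)) t"
  proof (rule incr_within[of 0 t])
    show "0 \<le> t" using t by simp
    fix s assume s: "s \<in> {0..t}"
    then have sT: "s \<in> {0..T}" using t by auto
    show "((\<lambda>s. - (u (Y s) s + sqrt (K * 3) * rho (Y s) s)) has_real_derivative
        (sqrt (K * 3) * real m * rho (Y s) s * u (Y s) s / Y s)) (at s within {0..t})"
    proof -
      have "((\<lambda>s. - (u (Y s) s + sqrt (K * 3) * rho (Y s) s)) has_real_derivative
        (sqrt (K * 3) * real m * rho (Y s) s * u (Y s) s / Y s)) (at s within {0..T})"
        using DERIV_minus[OF ch2_deriv[OF Y sT]] by simp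
      then show ?thesis by (rule DERIV_subset) (use t in auto)
    qed
    show "0 \<le> sqrt (K * 3) * real m * rho (Y s) s * u (Y s) s / Y s"
      using R[OF sT] Yp[OF sT] U[OF s] K by (intro divide_nonneg_pos mult_nonneg_nonneg) auto
  qed
  then show ?thesis by simp
qed

lemma lip1:
  assumes s: "s \<in> {0..T}" and xy: "0 < x" "x \<le> y"
    and B: "\<And>z. x \<le> z \<Longrightarrow> z \<le> y \<Longrightarrow> \<bar>pd_r u z s\<bar> \<le> L1 \<and> \<bar>pd_r rho z s\<bar> \<le> L2"
  shows "\<bar>(u y s - sqrt (K * 3) * rho y s) - (u x s - sqrt (K * 3) * rho x s)\<bar> \<le> (L1 + sqrt (K * 3) * L2) * (y - x)"
proof (cases "x = y")
  case True then show ?thesis by simp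
next
  case False
  with xy have lt: "x < y" by simp
  define k where "k = sqrt (K * 3)"
  have "\<exists>z. x < z \<and> z < y \<and> (u y s - k * rho y s) - (u x s - k * rho x s) = (y - x) * (pd_r u z s - k * pd_r rho z s)"
  proof (rule MVT2[OF lt])
    fix z assume z: "x \<le> z" "z \<le> y"
    then have a: "(z, s) \<in> half_strip T" using xy s by (auto simp: half_strip_def)
    show "((\<lambda>z. u z s - k * rho z s) has_real_derivative (pd_r u z s - k * pd_r rho z s)) (at z)"
      by (intro DERIV_diff DERIV_cmult C1_dr[OF Cu a] C1_dr[OF Crho a])
  qed
  then obtain z where z: "x < z" "z < y" and eq: "(u y s - k * rho y s) - (u x s - k * rho x s) = (y - x) * (pd_r u z s - k * pd_r rho z s)"
    by blast
  have k0: "0 \<le> k" unfolding k_def using K by simp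
  from B[of z] z have b: "\<bar>pd_r u z s\<bar> \<le> L1" "\<bar>pd_r rho z s\<bar> \<le> L2" by auto
  have "\<bar>pd_r u z s - k * pd_r rho z s\<bar> \<le> \<bar>pd_r u z s\<bar> + k * \<bar>pd_r rho z s\<bar>"
    using k0 by (metis abs_mult abs_of_nonneg abs_triangle_ineq4)
  also have "\<dots> \<le> L1 + k * L2" using b k0 by (intro add_mono mult_left_mono) auto
  finally have "\<bar>pd_r u z s - k * pd_r rho z s\<bar> \<le> L1 + k * L2" .
  then have "\<bar>y - x\<bar> * \<bar>pd_r u z s - k * pd_r rho z s\<bar> \<le> (y - x) * (L1 + k * L2)"
    using lt by (simp add: mult_left_mono)
  then show ?thesis unfolding k_def[symmetric] eq abs_mult by (simp add: mult.commute)
qed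

end


context eul begin

lemma ch1_D:
  assumes "ch1 X" "s \<in> {0..T}"
  shows "0 < X s" "(X has_real_derivative (u (X s) s - sqrt (K * 3) * rho (X s) s)) (at s within {0..T})"
  using assms unfolding ch1_def by auto

lemma ch2_D:
  assumes "ch2 X" "s \<in> {0..T}"
  shows "0 < X s" "(X has_real_derivative (u (X s) s + sqrt (K * 3) * rho (X s) s)) (at s within {0..T})"
  using assms unfolding ch2_def by auto

lemma gronwall_step:
  assumes X1: "ch1 X1" and X2: "ch1 X2" and p: "p \<in> {0..T}"
    and le: "\<And>s. s \<in> {0..p} \<Longrightarrow> X1 s \<le> X2 s"
    and L: "\<And>s. s \<in> {0..p} \<Longrightarrow> \<bar>(u (X2 s) s - sqrt (K * 3) * rho (X2 s) s) - (u (X1 s) s - sqrt (K * 3) * rho (X1 s) s)\<bar> \<le> L * (X2 s - X1 s)"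
  shows "(X2 0 - X1 0) \<le> (X2 p - X1 p) * exp (L * p)"
    and "(X2 p - X1 p) \<le> (X2 0 - X1 0) * exp (L * p)"
proof -
  define c where "c = (\<lambda>X s. u (X s) s - sqrt (K * 3) * rho (X s) s)"
  define D where "D = (\<lambda>s. X2 s - X1 s)"
  have DD: "(D has_real_derivative (c X2 s - c X1 s)) (at s within {0..p})" if s: "s \<in> {0..p}" for s
  proof -
    have sT: "s \<in> {0..T}" using s p by auto
    have "(D has_real_derivative (c X2 s - c X1 s)) (at s within {0..T})"
      unfolding D_def c_def by (intro DERIV_diff ch1_D(2)[OF X2 sT] ch1_D(2)[OF X1 sT])
    then show ?thesis by (rule DERIV_subset) (use p in auto)
  qed
  have Lc: "\<bar>c X2 s - c X1 s\<bar> \<le> L * D s" if "s \<in> {0..p}" for s using L[OF that] by (simp add: c_def D_def)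
  have p0: "0 \<le> p" using p by simp
  have "(\<lambda>s. D s * exp (L * s)) 0 \<le> (\<lambda>s. D s * exp (L * s)) p"
  proof (rule incr_within[OF p0])
    fix s assume s: "s \<in> {0..p}"
    show "((\<lambda>s. D s * exp (L * s)) has_real_derivative (c X2 s - c X1 s) * exp (L * s) + exp (L * s) * L * D s) (at s within {0..p})"
    proof -
      have e: "((\<lambda>s. exp (L * s)) has_real_derivative exp (L * s) * L) (at s within {0..p})"
        by (rule DERIV_cong[OF DERIV_chain2[OF DERIV_exp DERIV_cmult[OF DERIV_ident]]]) simp
      show ?thesis by (rule DERIV_cong[OF DERIV_mult[OF DD[OF s] e]]) (simp add: algebra_simps)
    qed
    have "0 \<le> c X2 s - c X1 s + L * D s" using Lc[OF s] by linarith
    then have "0 \<le> (c X2 s - c X1 s + L * D s) * exp (L * s)" by simp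
    then show "0 \<le> (c X2 s - c X1 s) * exp (L * s) + exp (L * s) * L * D s" by (simp add: algebra_simps)
  qed
  then show "(X2 0 - X1 0) \<le> (X2 p - X1 p) * exp (L * p)" by (simp add: D_def)
  have "(\<lambda>s. - (D s * exp (- L * s))) 0 \<le> (\<lambda>s. - (D s * exp (- L * s))) p"
  proof (rule incr_within[OF p0])
    fix s assume s: "s \<in> {0..p}"
    show "((\<lambda>s. - (D s * exp (- L * s))) has_real_derivative - ((c X2 s - c X1 s) * exp (- L * s) + exp (- L * s) * (- L) * D s)) (at s within {0..p})"
    proof -
      have e: "((\<lambda>s. exp (- L * s)) has_real_derivative exp (- L * s) * (- L)) (at s within {0..p})"
        by (rule DERIV_cong[OF DERIV_chain2[OF DERIV_exp DERIV_cmult[OF DERIV_ident]]]) simp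
      show ?thesis by (rule DERIV_minus[OF DERIV_cong[OF DERIV_mult[OF DD[OF s] e]]]) (simp add: algebra_simps)
    qed
    have "0 \<le> L * D s - (c X2 s - c X1 s)" using Lc[OF s] by linarith
    then have "0 \<le> (L * D s - (c X2 s - c X1 s)) * exp (- L * s)" by simp
    then show "0 \<le> - ((c X2 s - c X1 s) * exp (- L * s) + exp (- L * s) * (- L) * D s)" by (simp add: algebra_simps)
  qed
  then have "D p * exp (- L * p) \<le> D 0" by simp
  then have "D p * exp (- L * p) * exp (L * p) \<le> D 0 * exp (L * p)" by simp
  then show "(X2 p - X1 p) \<le> (X2 0 - X1 0) * exp (L * p)"
    by (simp add: D_def mult.assoc exp_add[symmetric])
qed

lemma lip_between:
  assumes X1: "ch1 X1" and X2: "ch1 X2" and p: "p \<in> {0..T}"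
    and le: "\<And>s. s \<in> {0..p} \<Longrightarrow> X1 s \<le> X2 s"
  shows "\<exists>L. \<forall>Y1 Y2. (\<forall>s\<in>{0..p}. X1 s \<le> Y1 s \<and> Y1 s \<le> Y2 s \<and> Y2 s \<le> X2 s) \<longrightarrow>
     (\<forall>s\<in>{0..p}. \<bar>(u (Y2 s) s - sqrt (K * 3) * rho (Y2 s) s) - (u (Y1 s) s - sqrt (K * 3) * rho (Y1 s) s)\<bar> \<le> L * (Y2 s - Y1 s))"
proof -
  have sub: "{0..p} \<subseteq> {0..T}" using p by auto
  have c1: "continuous_on {0..p} X1" by (rule continuous_on_subset[OF ch1_cont[OF X1] sub])
  have c2: "continuous_on {0..p} X2" by (rule continuous_on_subset[OF ch1_cont[OF X2] sub])
  have fg: "\<And>s. s \<in> {0..p} \<Longrightarrow> 0 < X1 s \<and> X1 s \<le> X2 s" using ch1_D(1)[OF X1] le sub by blast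
  obtain L1 where L1: "\<forall>s\<in>{0..p}. \<forall>x. X1 s \<le> x \<longrightarrow> x \<le> X2 s \<longrightarrow> \<bar>pd_r u x s\<bar> \<le> L1"
    using bound_between[OF cont_u_r c1 c2 _ _ fg] p by auto
  obtain L2 where L2: "\<forall>s\<in>{0..p}. \<forall>x. X1 s \<le> x \<longrightarrow> x \<le> X2 s \<longrightarrow> \<bar>pd_r rho x s\<bar> \<le> L2"
    using bound_between[OF cont_rho_r c1 c2 _ _ fg] p by auto
  show ?thesis
  proof (intro exI[of _ "L1 + sqrt (K * 3) * L2"] allI impI ballI)
    fix Y1 Y2 s assume Y: "\<forall>s\<in>{0..p}. X1 s \<le> Y1 s \<and> Y1 s \<le> Y2 s \<and> Y2 s \<le> X2 s" and s: "s \<in> {0..p}"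
    show "\<bar>(u (Y2 s) s - sqrt (K * 3) * rho (Y2 s) s) - (u (Y1 s) s - sqrt (K * 3) * rho (Y1 s) s)\<bar> \<le> (L1 + sqrt (K * 3) * L2) * (Y2 s - Y1 s)"
    proof (rule lip1)
      show "s \<in> {0..T}" using s sub by auto
      show "0 < Y1 s" using fg[OF s] Y s by force
      show "Y1 s \<le> Y2 s" using Y s by auto
      fix z assume "Y1 s \<le> z" "z \<le> Y2 s"
      then have "X1 s \<le> z" "z \<le> X2 s" using Y s by force+
      then show "\<bar>pd_r u z s\<bar> \<le> L1 \<and> \<bar>pd_r rho z s\<bar> \<le> L2" using L1 L2 s by blast
    qed
  qed
qed

lemma order1:
  assumes X1: "ch1 X1" and X2: "ch1 X2" and lt0: "X1 0 < X2 0" and s: "s \<in> {0..T}"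
  shows "X1 s < X2 s"
proof (rule ccontr)
  assume "\<not> X1 s < X2 s"
  define D where "D = (\<lambda>s. X2 s - X1 s)"
  have subs: "{0..s} \<subseteq> {0..T}" using s by auto
  have cD: "continuous_on {0..s} D" unfolding D_def
    by (intro continuous_intros continuous_on_subset[OF ch1_cont[OF X1] subs] continuous_on_subset[OF ch1_cont[OF X2] subs])
  have Ds: "D s \<le> 0" and D0: "0 < D 0" using \<open>\<not> X1 s < X2 s\<close> lt0 by (auto simp: D_def)
  define Z where "Z = {0..s} \<inter> D -` {0}"
  have "\<exists>z. 0 \<le> z \<and> z \<le> s \<and> D z = 0" by (rule IVT2'[OF Ds _ _ cD]) (use D0 s in auto)
  then have "Z \<noteq> {}" by (auto simp: Z_def)
  moreover have "closed Z" unfolding Z_def by (rule continuous_closed_preimage[OF cD]) auto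
  moreover have bb: "bdd_below Z" by (auto simp: Z_def bdd_below_def)
  ultimately have s1Z: "Inf Z \<in> Z" by (metis closed_contains_Inf)
  define s1 where "s1 = Inf Z"
  have lower: "s1 \<le> z" if "z \<in> Z" for z using that bb by (simp add: s1_def cInf_lower)
  have s1: "0 \<le> s1" "s1 \<le> s" "D s1 = 0" using s1Z by (auto simp: Z_def s1_def)
  have s1T: "s1 \<in> {0..T}" using s1 s by auto
  have nn: "0 \<le> D s'" if s': "s' \<in> {0..s1}" for s'
  proof (rule ccontr)
    assume "\<not> 0 \<le> D s'"
    then have neg: "D s' \<le> 0" by simp
    have "\<exists>z. 0 \<le> z \<and> z \<le> s' \<and> D z = 0"
      by (rule IVT2'[OF neg _ _ continuous_on_subset[OF cD]]) (use D0 s' s1 in auto)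
    then obtain z where z: "0 \<le> z" "z \<le> s'" "D z = 0" by auto
    then have "z \<in> Z" using s' s1 by (auto simp: Z_def)
    then have "s1 \<le> z" by (rule lower)
    then have "z = s'" "s' = s1" using z s' by auto
    then show False using \<open>\<not> 0 \<le> D s'\<close> s1 by simp
  qed
  have le: "\<And>s'. s' \<in> {0..s1} \<Longrightarrow> X1 s' \<le> X2 s'" using nn by (simp add: D_def)
  obtain L where L: "\<forall>Y1 Y2. (\<forall>s\<in>{0..s1}. X1 s \<le> Y1 s \<and> Y1 s \<le> Y2 s \<and> Y2 s \<le> X2 s) \<longrightarrow>
     (\<forall>s\<in>{0..s1}. \<bar>(u (Y2 s) s - sqrt (K * 3) * rho (Y2 s) s) - (u (Y1 s) s - sqrt (K * 3) * rho (Y1 s) s)\<bar> \<le> L * (Y2 s - Y1 s))"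
    using lip_between[OF X1 X2 s1T le] by blast
  have "\<forall>s\<in>{0..s1}. \<bar>(u (X2 s) s - sqrt (K * 3) * rho (X2 s) s) - (u (X1 s) s - sqrt (K * 3) * rho (X1 s) s)\<bar> \<le> L * (X2 s - X1 s)"
    using L le by blast
  then have "(X2 0 - X1 0) \<le> (X2 s1 - X1 s1) * exp (L * s1)"
    by (intro gronwall_step(1)[OF X1 X2 s1T le]) auto
  then show False using s1 D0 by (simp add: D_def)
qed

lemma flow_props:
  assumes xi: "\<And>r. r \<in> {a..b} \<Longrightarrow> ch1 (xi r)" and xi0: "\<And>r. r \<in> {a..b} \<Longrightarrow> xi r 0 = r" and ab: "a \<le> b"
  shows "\<And>r r' s. r \<in> {a..b} \<Longrightarrow> r' \<in> {a..b} \<Longrightarrow> r \<le> r' \<Longrightarrow> s \<in> {0..T} \<Longrightarrow> xi r s \<le> xi r' s"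
    and "\<And>s. s \<in> {0..T} \<Longrightarrow> continuous_on {a..b} (\<lambda>r. xi r s)"
proof -
  show mono: "xi r s \<le> xi r' s" if "r \<in> {a..b}" "r' \<in> {a..b}" "r \<le> r'" "s \<in> {0..T}" for r r' s
  proof (cases "r = r'")
    case False
    then have "xi r 0 < xi r' 0" using that xi0 by simp
    from order1[OF xi[OF that(1)] xi[OF that(2)] this that(4)] show ?thesis by simp
  qed simp
  have aa: "a \<in> {a..b}" and bb: "b \<in> {a..b}" using ab by auto
  have Tm: "T \<in> {0..T}" using T by simp
  obtain L where L: "\<forall>Y1 Y2. (\<forall>s\<in>{0..T}. xi a s \<le> Y1 s \<and> Y1 s \<le> Y2 s \<and> Y2 s \<le> xi b s) \<longrightarrow>
     (\<forall>s\<in>{0..T}. \<bar>(u (Y2 s) s - sqrt (K * 3) * rho (Y2 s) s) - (u (Y1 s) s - sqrt (K * 3) * rho (Y1 s) s)\<bar> \<le> L * (Y2 s - Y1 s))"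
    using lip_between[OF xi[OF aa] xi[OF bb] Tm] mono[OF aa bb ab] by blast
  define C where "C = exp (\<bar>L\<bar> * T)"
  have est: "xi r' s - xi r s \<le> C * (r' - r)" if r: "r \<in> {a..b}" "r' \<in> {a..b}" "r \<le> r'" and s: "s \<in> {0..T}" for r r' s
  proof -
    have "\<forall>s\<in>{0..T}. xi a s \<le> xi r s \<and> xi r s \<le> xi r' s \<and> xi r' s \<le> xi b s"
      using mono r aa bb by auto
    then have LL: "\<forall>s\<in>{0..T}. \<bar>(u (xi r' s) s - sqrt (K * 3) * rho (xi r' s) s) - (u (xi r s) s - sqrt (K * 3) * rho (xi r s) s)\<bar> \<le> L * (xi r' s - xi r s)"
      using L by blast
    have "xi r' s - xi r s \<le> (xi r' 0 - xi r 0) * exp (L * s)"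
      by (rule gronwall_step(2)[OF xi[OF r(1)] xi[OF r(2)] s]) (use mono r s LL in auto)
    also have "\<dots> \<le> (r' - r) * C"
    proof -
      have "L * s \<le> \<bar>L\<bar> * T" using s by (intro order.trans[OF abs_ge_self[of "L * s"]]) (auto simp: abs_mult intro!: mult_left_mono)
      then have "exp (L * s) \<le> C" unfolding C_def by simp
      moreover have "0 \<le> r' - r" using r by simp
      ultimately show ?thesis using xi0 r by (simp add: mult_left_mono)
    qed
    finally show ?thesis by (simp add: mult.commute)
  qed
  show "continuous_on {a..b} (\<lambda>r. xi r s)" if s: "s \<in> {0..T}" for s
  proof (rule lipschitz_on_continuous_on)
    show "C-lipschitz_on {a..b} (\<lambda>r. xi r s)"
    proof (rule lipschitz_onI)
      fix x y assume xy: "x \<in> {a..b}" "y \<in> {a..b}"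
      show "dist (xi x s) (xi y s) \<le> C * dist x y"
      proof (cases "x \<le> y")
        case True
        then show ?thesis using est[OF xy True s] mono[OF xy True s] by (simp add: dist_real_def)
      next
        case False
        then have yx: "y \<le> x" by simp
        have "\<bar>x - y\<bar> = x - y" using yx by simp
        then show ?thesis using est[OF xy(2,1) yx s] mono[OF xy(2,1) yx s] by (simp add: dist_real_def)
      qed
    qed (simp add: C_def)
  qed
qed

end


theorem mainTheorem1:
  fixes m :: nat and K T a b :: real
    and rho u xi psi :: "real \<Rightarrow> real \<Rightarrow> real"
  assumes hm: "m \<in> {1, 2}"
    and hK: "0 < K"
    and hT: "0 < T"
    and hab: "0 < a" "a < b"
    and hsol: "radial_euler_solution m K 3 T rho u"
    and hxi: "is_flow a b T (c1 K 3 rho u) xi"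
    and hpsi: "is_flow a b T (c2 K 3 rho u) psi"
    and hpos: "\<forall>r \<in> {a..b}. 0 < c1 K 3 rho u r 0"
  shows "\<forall>(r, t) \<in> domain_of_influence a b T xi psi.
           c1 K 3 rho u r t \<ge> (INF r'\<in>{a..b}. c1 K 3 rho u r' 0) \<and>
           c2 K 3 rho u r t \<le> (SUP r'\<in>{a..b}. \<bar>c2 K 3 rho u r' 0\<bar>)"
proof -
  have m1: "1 \<le> m" using hm by auto
  interpret E: eul m K T rho u
    by unfold_locales (rule hT hK m1 hsol)+
  define k where "k = sqrt (K * 3)"
  have kpos: "0 < k" unfolding k_def using hK by simp
  have strip0: "(r, 0) \<in> half_strip T" if "r \<in> {a..b}" for r using that hab hT by (auto simp: half_strip_def)
  have xi_ch: "E.ch1 (xi r)" and xi0: "xi r 0 = r" if r: "r \<in> {a..b}" for r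
  proof -
    have F: "xi r 0 = r \<and> (\<forall>t\<in>{0..T}. 0 < xi r t \<and>
           ((xi r) has_real_derivative c1 K 3 rho u (xi r t) t) (at t within {0..T}))"
      using hxi r unfolding is_flow_def by blast
    then show "xi r 0 = r" by simp
    show "E.ch1 (xi r)" unfolding E.ch1_def
    proof
      fix t assume t: "t \<in> {0..T}"
      with F have p: "0 < xi r t" by blast
      then have "(xi r t, t) \<in> half_strip T" using t by (auto simp: half_strip_def)
      then show "0 < xi r t \<and> (xi r has_real_derivative u (xi r t) t - sqrt (K * 3) * rho (xi r t) t) (at t within {0..T})"
        using F t p E.c1_eq by metis
    qed
  qed
  have psi_ch: "E.ch2 (psi r)" and psi0: "psi r 0 = r" if r: "r \<in> {a..b}" for r
  proof -
    have F: "psi r 0 = r \<and> (\<forall>t\<in>{0..T}. 0 < psi r t \<and>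
           ((psi r) has_real_derivative c2 K 3 rho u (psi r t) t) (at t within {0..T}))"
      using hpsi r unfolding is_flow_def by blast
    then show "psi r 0 = r" by simp
    show "E.ch2 (psi r)" unfolding E.ch2_def
    proof
      fix t assume t: "t \<in> {0..T}"
      with F have p: "0 < psi r t" by blast
      then have "(psi r t, t) \<in> half_strip T" using t by (auto simp: half_strip_def)
      then show "0 < psi r t \<and> (psi r has_real_derivative u (psi r t) t + sqrt (K * 3) * rho (psi r t) t) (at t within {0..T})"
        using F t p E.c2_eq by metis
    qed
  qed
  have g0: "0 < u (xi r 0) 0 - sqrt (K * 3) * rho (xi r 0) 0" if r: "r \<in> {a..b}" for r
  proof -
    have "0 < c1 K 3 rho u r 0" using hpos r by blast
    then show ?thesis using E.c1_eq[OF strip0[OF r]] xi0[OF r] by simp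
  qed
  have grow: "u r 0 - sqrt (K * 3) * rho r 0 \<le> u (xi r s) s - sqrt (K * 3) * rho (xi r s) s"
    if r: "r \<in> {a..b}" and s: "s \<in> {0..T}" for r s
    using E.c1_grow[OF xi_ch[OF r] g0[OF r] s] xi0[OF r] by simp
  have ab: "a \<le> b" using hab by simp
  have fcont: "\<And>s. s \<in> {0..T} \<Longrightarrow> continuous_on {a..b} (\<lambda>r. xi r s)"
    using E.flow_props(2)[of a b xi] xi_ch xi0 ab by blast
  show ?thesis
  proof (clarify)
    fix r t assume "(r, t) \<in> domain_of_influence a b T xi psi"
    then obtain r1 r2 where t: "t \<in> {0..T}" and r1: "r1 \<in> {a..b}" and r2: "r2 \<in> {a..b}"
      and pr: "psi r1 t = r" and xr: "xi r2 t = r"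
      unfolding domain_of_influence_def by auto
    have rstrip: "(r, t) \<in> half_strip T"
      using E.ch1_D(1)[OF xi_ch[OF r2] t] xr t by (auto simp: half_strip_def)
    have "c1 K 3 rho u r2 0 \<le> c1 K 3 rho u r t"
      using grow[OF r2 t] E.c1_eq[OF strip0[OF r2]] E.c1_eq[OF rstrip] xr by simp
    moreover have "(INF r'\<in>{a..b}. c1 K 3 rho u r' 0) \<le> c1 K 3 rho u r2 0"
    proof (rule cINF_lower[OF _ r2])
      show "bdd_below ((\<lambda>r'. c1 K 3 rho u r' 0) ` {a..b})"
        by (rule bdd_belowI2[of _ 0]) (use hpos in \<open>auto intro: less_imp_le\<close>)
    qed
    ultimately have claim1: "(INF r'\<in>{a..b}. c1 K 3 rho u r' 0) \<le> c1 K 3 rho u r t" by linarith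
    have aa: "a \<in> {a..b}" using ab by simp
    have lowF: "\<forall>s\<in>{0..T}. 0 \<le> psi r1 s - xi a s"
    proof (rule stay_nonneg)
      show "0 \<le> T" using hT by simp
      show "continuous_on {0..T} (\<lambda>s. psi r1 s - xi a s)"
        by (intro continuous_intros E.ch2_cont[OF psi_ch[OF r1]] E.ch1_cont[OF xi_ch[OF aa]])
      show "0 \<le> psi r1 0 - xi a 0" using psi0[OF r1] xi0[OF aa] r1 by simp
      fix s assume s: "s \<in> {0..<T}" and z: "psi r1 s - xi a s = 0"
      have sT: "s \<in> {0..T}" using s by simp
      have "((\<lambda>s. psi r1 s - xi a s) has_real_derivative
          (u (psi r1 s) s + sqrt (K * 3) * rho (psi r1 s) s) - (u (xi a s) s - sqrt (K * 3) * rho (xi a s) s)) (at s within {0..T})"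
        using psi_ch[OF r1] xi_ch[OF aa] sT unfolding E.ch1_def E.ch2_def by (intro DERIV_diff) auto
      moreover have "0 < (u (psi r1 s) s + sqrt (K * 3) * rho (psi r1 s) s) - (u (xi a s) s - sqrt (K * 3) * rho (xi a s) s)"
      proof -
        have "psi r1 s = xi a s" using z by simp
        moreover have "0 < rho (xi a s) s" using E.ch1_D(1)[OF xi_ch[OF aa] sT] sT by (intro E.rpos) (auto simp: half_strip_def)
        ultimately show ?thesis using hK by simp
      qed
      ultimately show "\<exists>d>0. \<forall>h>0. s + h \<in> {0..T} \<longrightarrow> h < d \<longrightarrow> 0 < psi r1 (s + h) - xi a (s + h)"
        using has_real_derivative_pos_inc_right z by fastforce
    qed
    have upE: "\<forall>s\<in>{0..t}. 0 \<le> xi r2 s - psi r1 s"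
    proof (rule stay_nonneg_back)
      show "0 \<le> t" using t by simp
      have sub: "{0..t} \<subseteq> {0..T}" using t by auto
      show "continuous_on {0..t} (\<lambda>s. xi r2 s - psi r1 s)"
        by (intro continuous_intros continuous_on_subset[OF E.ch2_cont[OF psi_ch[OF r1]] sub]
            continuous_on_subset[OF E.ch1_cont[OF xi_ch[OF r2]] sub])
      show "0 \<le> xi r2 t - psi r1 t" using pr xr by simp
      fix s assume s: "s \<in> {0<..t}" and z: "xi r2 s - psi r1 s = 0"
      have sT: "s \<in> {0..T}" using s t by simp
      have "((\<lambda>s. xi r2 s - psi r1 s) has_real_derivative
          (u (xi r2 s) s - sqrt (K * 3) * rho (xi r2 s) s) - (u (psi r1 s) s + sqrt (K * 3) * rho (psi r1 s) s)) (at s within {0..T})"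
        using psi_ch[OF r1] xi_ch[OF r2] sT unfolding E.ch1_def E.ch2_def by (intro DERIV_diff) auto
      moreover have "(u (xi r2 s) s - sqrt (K * 3) * rho (xi r2 s) s) - (u (psi r1 s) s + sqrt (K * 3) * rho (psi r1 s) s) < 0"
      proof -
        have "psi r1 s = xi r2 s" using z by simp
        moreover have "0 < rho (xi r2 s) s" using E.ch1_D(1)[OF xi_ch[OF r2] sT] sT by (intro E.rpos) (auto simp: half_strip_def)
        ultimately show ?thesis using hK by simp
      qed
      ultimately obtain d where d: "d > 0" "\<forall>h>0. s - h \<in> {0..T} \<longrightarrow> h < d \<longrightarrow> xi r2 s - psi r1 s < xi r2 (s - h) - psi r1 (s - h)"
        using has_real_derivative_neg_dec_left by blast
      show "\<exists>d>0. \<forall>h>0. s - h \<in> {0..t} \<longrightarrow> h < d \<longrightarrow> 0 < xi r2 (s - h) - psi r1 (s - h)"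
        using d z t by (intro exI[of _ d]) auto
    qed
    have U: "0 \<le> u (psi r1 s) s" if s: "s \<in> {0..t}" for s
    proof -
      have sT: "s \<in> {0..T}" using s t by auto
      have ar2: "a \<le> r2" using r2 by simp
      have c: "continuous_on {a..r2} (\<lambda>r. xi r s)"
        by (rule continuous_on_subset[OF fcont[OF sT]]) (use r2 in auto)
      have "\<exists>r'. a \<le> r' \<and> r' \<le> r2 \<and> xi r' s = psi r1 s"
        by (rule IVT'[OF _ _ ar2 c]) (use lowF upE sT s in auto)
      then obtain r' where r'0: "a \<le> r'" "r' \<le> r2" "xi r' s = psi r1 s" by blast
      have r': "r' \<in> {a..b}" "xi r' s = psi r1 s" using r'0 r2 by auto
      have "0 < u r' 0 - sqrt (K * 3) * rho r' 0" using g0[OF r'(1)] xi0[OF r'(1)] by simp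
      also have "\<dots> \<le> u (psi r1 s) s - sqrt (K * 3) * rho (psi r1 s) s" using grow[OF r'(1) sT] r'(2) by simp
      finally have "0 < u (psi r1 s) s - sqrt (K * 3) * rho (psi r1 s) s" .
      moreover have "0 < rho (psi r1 s) s" using E.ch2_D(1)[OF psi_ch[OF r1] sT] sT by (intro E.rpos) (auto simp: half_strip_def)
      ultimately show ?thesis using hK
        by (smt (verit) mult_pos_pos real_sqrt_gt_zero)
    qed
    have "c2 K 3 rho u r t \<le> c2 K 3 rho u r1 0"
      using E.c2_decay[OF psi_ch[OF r1] t U] E.c2_eq[OF rstrip] E.c2_eq[OF strip0[OF r1]] pr psi0[OF r1] by simp
    also have "\<dots> \<le> \<bar>c2 K 3 rho u r1 0\<bar>" by simp
    also have "\<dots> \<le> (SUP r'\<in>{a..b}. \<bar>c2 K 3 rho u r' 0\<bar>)"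
    proof (rule cSUP_upper[OF r1])
      have sub: "(\<lambda>r. (r, 0::real)) ` {a..b} \<subseteq> half_strip T" using strip0 by auto
      have cp: "continuous_on {a..b} (\<lambda>r. (r, 0::real))" by (intro continuous_intros)
      have cu: "continuous_on {a..b} (\<lambda>r. u r 0)"
        using continuous_on_compose2[OF E.cont_u cp sub] by simp
      have cr: "continuous_on {a..b} (\<lambda>r. rho r 0)"
        using continuous_on_compose2[OF E.cont_rho cp sub] by simp
      have "continuous_on {a..b} (\<lambda>r'. \<bar>u r' 0 + sqrt (K * 3) * rho r' 0\<bar>)"
        by (intro continuous_intros cu cr)
      then have "continuous_on {a..b} (\<lambda>r'. \<bar>c2 K 3 rho u r' 0\<bar>)"
        by (rule continuous_on_cong[THEN iffD1, rotated 2]) (use E.c2_eq strip0 in auto)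
      then have "compact ((\<lambda>r'. \<bar>c2 K 3 rho u r' 0\<bar>) ` {a..b})"
        by (rule compact_continuous_image) simp
      then show "bdd_above ((\<lambda>r'. \<bar>c2 K 3 rho u r' 0\<bar>) ` {a..b})"
        by (intro bounded_imp_bdd_above compact_imp_bounded)
    qed
    finally have claim2: "c2 K 3 rho u r t \<le> (SUP r'\<in>{a..b}. \<bar>c2 K 3 rho u r' 0\<bar>)" .
    show "(INF r'\<in>{a..b}. c1 K 3 rho u r' 0) \<le> c1 K 3 rho u r t \<and> c2 K 3 rho u r t \<le> (SUP r'\<in>{a..b}. \<bar>c2 K 3 rho u r' 0\<bar>)"
      using claim1 claim2 by simp
  qed
qed


end
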